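(* Let $(X,A)$ be an affinity space, let $\tau_A$ be the topology induced by $A$, and for $\lambda>0$ let $\tau_\lambda$ be the topology induced by the thresholded affinity $A^\lambda$. Let $\kappa(\lambda)$ be the number (cardinality) of connected components of $(X,\tau_\lambda)$ and $\kappa_A$ the number of connected components of $(X,\tau_A)$. Then: (a) if $0<\lambda_1<\lambda_2$, then $\tau_{\lambda_1}\subseteq\tau_{\lambda_2}\subseteq\tau_A$; (b) $\lambda\mapsto\kappa(\lambda)$ is nondecreasing on $(0,\infty)$ and $\kappa(\lambda)\le\kappa_A$ for every $\lambda>0$; (c) if $X$ is finite, then there exists $\Lambda>0$ such that for all $\lambda>\Lambda$ we have $\tau_\lambda=\tau_A$ and $\kappa(\lambda)=\kappa_A$.
   Context: An affinity on a set $X$ is a function $A:X\times X\to(0,+\infty]$ such that $A(x_1,x_2)=A(x_2,x_1)$ for all $x_1,x_2\in X$ and $A(x,x)=+\infty$ for all $x\in X$ (values $+\infty$ off the diagonal are allowed); $(X,A)$ is an affinity space. For $x\in X$, $\alpha>0$ let $E(x,\alpha)=\{y\in X:A(x,y)>\alpha\}$. The topology induced by $A$ is $\tau_A=\{U\subseteq X:\ \text{for every } x\in U \text{ there is } \alpha>0 \text{ with } E(x,\alpha)\subseteq U\}$. For $\lambda>0$ the thresholded affinity is $A^\lambda(x,y)=+\infty$ if $A(x,y)>\lambda$ and $A^\lambda(x,y)=A(x,y)$ if $A(x,y)\le\lambda$; it is again an affinity, and $\tau_\lambda$ denotes the topology induced by $A^\lambda$ in the same way. A subset $S$ of a topological space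 is connected if it cannot be covered by two disjoint open sets each meeting $S$; the connected component of $x$ is the union of all connected sets containing $x$. *)

theory Defs
  imports "HOL-Analysis.Analysis" "HOL-Library.Equipollence"
begin

definition affinity :: "'a set \<Rightarrow> ('a \<Rightarrow> 'a \<Rightarrow> ereal) \<Rightarrow> bool" where
  "affinity X A \<longleftrightarrow>
     (\<forall>x\<in>X. \<forall>y\<in>X. A x y > 0) \<and>
     (\<forall>x\<in>X. \<forall>y\<in>X. A x y = A y x) \<and>
     (\<forall>x\<in>X. A x x = \<infinity>)"

definition aff_ball :: "'a set \<Rightarrow> ('a \<Rightarrow> 'a \<Rightarrow> ereal) \<Rightarrow> 'a \<Rightarrow> real \<Rightarrow> 'a set" where
  "aff_ball X A x \<alpha> = {y \<in> X. A x y > ereal \<alpha>}"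

definition aff_topology :: "'a set \<Rightarrow> ('a \<Rightarrow> 'a \<Rightarrow> ereal) \<Rightarrow> 'a topology" where
  "aff_topology X A = topology (\<lambda>U. U \<subseteq> X \<and> (\<forall>x\<in>U. \<exists>\<alpha>>0. aff_ball X A x \<alpha> \<subseteq> U))"

definition thresh :: "('a \<Rightarrow> 'a \<Rightarrow> ereal) \<Rightarrow> real \<Rightarrow> 'a \<Rightarrow> 'a \<Rightarrow> ereal" where
  "thresh A t x y = (if A x y > ereal t then \<infinity> else A x y)"

end

theory Submission
  imports Defs
begin

lemma aff_istop: "istopology (\<lambda>U. U \<subseteq> X \<and> (\<forall>x\<in>U. \<exists>\<alpha>>0. aff_ball X A x \<alpha> \<subseteq> U))"
  unfolding istopology_def
proof (rule conjI; intro allI impI)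
  fix S T assume S: "S \<subseteq> X \<and> (\<forall>x\<in>S. \<exists>\<alpha>>0. aff_ball X A x \<alpha> \<subseteq> S)"
    and T: "T \<subseteq> X \<and> (\<forall>x\<in>T. \<exists>\<alpha>>0. aff_ball X A x \<alpha> \<subseteq> T)"
  show "S \<inter> T \<subseteq> X \<and> (\<forall>x\<in>S \<inter> T. \<exists>\<alpha>>0. aff_ball X A x \<alpha> \<subseteq> S \<inter> T)"
  proof (intro conjI ballI)
    show "S \<inter> T \<subseteq> X" using S by blast
  next
    fix x assume "x \<in> S \<inter> T"
    then obtain a b where a: "a>0" "aff_ball X A x a \<subseteq> S" and b: "b>0" "aff_ball X A x b \<subseteq> T"
      using S T by blast
    have "aff_ball X A x (max a b) \<subseteq> aff_ball X A x a" "aff_ball X A x (max a b) \<subseteq> aff_ball X A x b"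
      unfolding aff_ball_def by (auto intro: order.strict_trans1[rotated])
    then have "aff_ball X A x (max a b) \<subseteq> S \<inter> T"
      using a b by blast
    then show "\<exists>\<alpha>>0. aff_ball X A x \<alpha> \<subseteq> S \<inter> T" using a b by (intro exI[of _ "max a b"]) auto
  qed
next
  fix K assume "\<forall>S\<in>K. S \<subseteq> X \<and> (\<forall>x\<in>S. \<exists>\<alpha>>0. aff_ball X A x \<alpha> \<subseteq> S)"
  then show "\<Union> K \<subseteq> X \<and> (\<forall>x\<in>\<Union> K. \<exists>\<alpha>>0. aff_ball X A x \<alpha> \<subseteq> \<Union> K)"
    by (meson Union_least Union_upper UnionE order_trans)
qed

lemma openin_aff: "openin (aff_topology X A) U \<longleftrightarrow> U \<subseteq> X \<and> (\<forall>x\<in>U. \<exists>\<alpha>>0. aff_ball X A x \<alpha> \<subseteq> U)"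
  unfolding aff_topology_def topology_inverse'[OF aff_istop] ..

lemma topspace_aff: "topspace (aff_topology X A) = X"
proof -
  have "openin (aff_topology X A) X" unfolding openin_aff aff_ball_def
    by (auto intro: exI[of _ 1])
  then show ?thesis using openin_subset[of "aff_topology X A"] openin_aff
    by (metis openin_topspace subset_antisym)
qed

lemma aux: "((if z > ereal t then \<infinity> else z) > ereal a) \<longleftrightarrow> z > ereal (min a t)"
  by (cases z) (auto simp: min_def)

lemma ball_thresh: "aff_ball X (thresh A t) x \<alpha> = aff_ball X A x (min \<alpha> t)"
  unfolding aff_ball_def thresh_def aux ..

lemma thresh_mono:
  assumes "0 < l1" "l1 \<le> l2" "openin (aff_topology X (thresh A l1)) U"
  shows "openin (aff_topology X (thresh A l2)) U"
proof -
  have UU: "U \<subseteq> X \<and> (\<forall>x\<in>U. \<exists>\<alpha>>0. aff_ball X A x (min \<alpha> l1) \<subseteq> U)"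
    using assms(3) unfolding openin_aff ball_thresh .
  have "\<forall>x\<in>U. \<exists>\<alpha>>0. aff_ball X A x (min \<alpha> l2) \<subseteq> U"
  proof
    fix x assume "x \<in> U"
    then obtain a where a: "a > 0" "aff_ball X A x (min a l1) \<subseteq> U" using UU by blast
    have e: "min (min a l1) l2 = min a l1" using assms(2) by simp
    have p: "min a l1 > 0" using a(1) assms(1) by simp
    show "\<exists>\<alpha>>0. aff_ball X A x (min \<alpha> l2) \<subseteq> U"
      by (rule exI[of _ "min a l1"]) (simp only: e p a(2) simp_thms)
  qed
  with conjunct1[OF UU] have "U \<subseteq> X \<and> (\<forall>x\<in>U. \<exists>\<alpha>>0. aff_ball X A x (min \<alpha> l2) \<subseteq> U)"
    by (rule conjI)
  then show ?thesis unfolding openin_aff ball_thresh .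
qed

lemma thresh_A:
  assumes "0 < l" "openin (aff_topology X (thresh A l)) U"
  shows "openin (aff_topology X A) U"
proof -
  have UU: "U \<subseteq> X \<and> (\<forall>x\<in>U. \<exists>\<alpha>>0. aff_ball X A x (min \<alpha> l) \<subseteq> U)"
    using assms(2) unfolding openin_aff ball_thresh .
  have "\<forall>x\<in>U. \<exists>\<alpha>>0. aff_ball X A x \<alpha> \<subseteq> U"
  proof
    fix x assume "x \<in> U"
    then obtain a where a: "a > 0" "aff_ball X A x (min a l) \<subseteq> U" using UU by blast
    have p: "min a l > 0" using a(1) assms(1) by simp
    show "\<exists>\<alpha>>0. aff_ball X A x \<alpha> \<subseteq> U"
      by (rule exI[of _ "min a l"]) (simp only: p a(2) simp_thms)
  qed
  with conjunct1[OF UU] have "U \<subseteq> X \<and> (\<forall>x\<in>U. \<exists>\<alpha>>0. aff_ball X A x \<alpha> \<subseteq> U)"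
    by (rule conjI)
  then show ?thesis unfolding openin_aff .
qed

lemma comp_lepoll:
  assumes top: "topspace T1 = topspace T2" and op: "\<And>U. openin T1 U \<Longrightarrow> openin T2 U"
  shows "connected_components_of T1 \<lesssim> connected_components_of T2"
proof -
  have cm: "continuous_map T2 T1 id"
    unfolding continuous_map_def
  proof (intro conjI allI impI)
    show "id \<in> topspace T2 \<rightarrow> topspace T1" using top by simp
  next
    fix U assume U: "openin T1 U"
    have "{x \<in> topspace T2. id x \<in> U} = U"
      using openin_subset[OF U] top by auto
    then show "openin T2 {x \<in> topspace T2. id x \<in> U}" using op[OF U] by simp
  qed
  have cc: "connected_component_of T1 x y" if h: "connected_component_of T2 x y" for x y
  proof -
    obtain T where T: "connectedin T2 T" "x \<in> T" "y \<in> T"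
      using h unfolding connected_component_of_def by blast
    have "connectedin T1 (id ` T)" by (rule connectedin_continuous_map_image[OF cm T(1)])
    then have "connectedin T1 T" by simp
    then show ?thesis unfolding connected_component_of_def using T(2,3) by blast
  qed
  define f where "f C = connected_component_of_set T1 (SOME x. x \<in> C)" for C
  have "connected_components_of T1 \<subseteq> f ` connected_components_of T2"
  proof
    fix C assume "C \<in> connected_components_of T1"
    then obtain x where x: "x \<in> topspace T1" "C = connected_component_of_set T1 x"
      unfolding connected_components_of_def by blast
    define D where "D = connected_component_of_set T2 x"
    have xT2: "x \<in> topspace T2" using x(1) top by simp
    have D: "D \<in> connected_components_of T2" unfolding D_def connected_components_of_def
      using xT2 by (rule imageI)
    have "x \<in> D" using xT2 unfolding D_def by (simp add: connected_component_of_refl)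
    then have "(SOME y. y \<in> D) \<in> D" by (rule someI)
    then have "connected_component_of T2 x (SOME y. y \<in> D)" unfolding D_def by simp
    then have conn: "connected_component_of T1 x (SOME y. y \<in> D)" by (rule cc)
    have "connected_component_of T1 x = connected_component_of T1 (SOME y. y \<in> D)"
      using connected_component_of_equiv[THEN iffD1, OF conn] by blast
    then have "f D = C" unfolding f_def x(2) by simp
    then show "C \<in> f ` connected_components_of T2" using D by blast
  qed
  then show ?thesis by (rule subset_image_lepoll)
qed

theorem mainTheorem5:
  fixes X :: "'a set" and A :: "'a \<Rightarrow> 'a \<Rightarrow> ereal"
  assumes "affinity X A"
  shows
    "(\<forall>l1 l2. 0 < l1 \<and> l1 < l2 \<longrightarrow>
        (\<forall>U. openin (aff_topology X (thresh A l1)) U \<longrightarrow> openin (aff_topology X (thresh A l2)) U) \<and>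
        (\<forall>U. openin (aff_topology X (thresh A l2)) U \<longrightarrow> openin (aff_topology X A) U))
   \<and> (\<forall>l1 l2. 0 < l1 \<and> l1 \<le> l2 \<longrightarrow>
        connected_components_of (aff_topology X (thresh A l1))
          \<lesssim> connected_components_of (aff_topology X (thresh A l2)))
   \<and> (\<forall>l>0. connected_components_of (aff_topology X (thresh A l))
          \<lesssim> connected_components_of (aff_topology X A))
   \<and> (finite X \<longrightarrow>
        (\<exists>L>0. \<forall>l>L. aff_topology X (thresh A l) = aff_topology X A \<and>
           connected_components_of (aff_topology X (thresh A l))
             \<approx> connected_components_of (aff_topology X A)))"
proof -
  have P1: "\<forall>l1 l2. 0 < l1 \<and> l1 < l2 \<longrightarrow>
        (\<forall>U. openin (aff_topology X (thresh A l1)) U \<longrightarrow> openin (aff_topology X (thresh A l2)) U) \<and>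
        (\<forall>U. openin (aff_topology X (thresh A l2)) U \<longrightarrow> openin (aff_topology X A) U)"
    using thresh_mono[of _ _ X A] thresh_A[of _ X A] by (meson less_imp_le less_trans)
  have P2: "\<forall>l1 l2. 0 < l1 \<and> l1 \<le> l2 \<longrightarrow>
        connected_components_of (aff_topology X (thresh A l1))
          \<lesssim> connected_components_of (aff_topology X (thresh A l2))"
  proof (intro allI impI)
    fix l1 l2 :: real assume h: "0 < l1 \<and> l1 \<le> l2"
    show "connected_components_of (aff_topology X (thresh A l1))
          \<lesssim> connected_components_of (aff_topology X (thresh A l2))"
      by (rule comp_lepoll) (simp_all add: topspace_aff thresh_mono[of l1 l2] h)
  qed
  have P3: "\<forall>l>0. connected_components_of (aff_topology X (thresh A l))
          \<lesssim> connected_components_of (aff_topology X A)"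
  proof (intro allI impI)
    fix l :: real assume h: "l > 0"
    show "connected_components_of (aff_topology X (thresh A l))
          \<lesssim> connected_components_of (aff_topology X A)"
      by (rule comp_lepoll) (simp_all add: topspace_aff thresh_A[of l] h)
  qed
  have P4: "finite X \<longrightarrow>
        (\<exists>L>0. \<forall>l>L. aff_topology X (thresh A l) = aff_topology X A \<and>
           connected_components_of (aff_topology X (thresh A l))
             \<approx> connected_components_of (aff_topology X A))"
  proof
  assume fin: "finite X"
  define S where "S = (\<lambda>(x,y). real_of_ereal (A x y)) ` (X \<times> X)"
  define L where "L = Max (insert 0 S) + 1"
  have finS: "finite (insert 0 S)" using fin unfolding S_def by auto
  have L0: "L > 0" unfolding L_def using finS by (simp add: add_nonneg_pos)
  have eq: "thresh A l x y = A x y" if "l > L" "x \<in> X" "y \<in> X" for l x y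
  proof (cases "A x y = \<infinity>")
    case True then show ?thesis unfolding thresh_def by auto
  next
    case False
    have pos: "A x y > 0" using assms that unfolding affinity_def by auto
    then have "A x y \<noteq> -\<infinity>" by auto
    then have "A x y = ereal (real_of_ereal (A x y))" using False by (cases "A x y") auto
    moreover have "real_of_ereal (A x y) \<in> insert 0 S" unfolding S_def using that by auto
    then have "real_of_ereal (A x y) \<le> Max (insert 0 S)" using finS by auto
    ultimately have "A x y \<le> ereal l" using that unfolding L_def
      by (metis ereal_less_eq(3) add.commute less_add_one less_trans linorder_not_le order_less_imp_le)
    then show ?thesis unfolding thresh_def by auto
  qed
  have "aff_topology X (thresh A l) = aff_topology X A" if "l > L" for l
  proof -
    have hb: "aff_ball X (thresh A l) x a = aff_ball X A x a" if "x \<in> X" for x a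
      unfolding aff_ball_def using eq[OF \<open>l > L\<close> that] by auto
    have "(\<lambda>U. U \<subseteq> X \<and> (\<forall>x\<in>U. \<exists>\<alpha>>0. aff_ball X (thresh A l) x \<alpha> \<subseteq> U))
        = (\<lambda>U. U \<subseteq> X \<and> (\<forall>x\<in>U. \<exists>\<alpha>>0. aff_ball X A x \<alpha> \<subseteq> U))"
    proof (rule ext)
      fix U
      show "(U \<subseteq> X \<and> (\<forall>x\<in>U. \<exists>\<alpha>>0. aff_ball X (thresh A l) x \<alpha> \<subseteq> U))
        = (U \<subseteq> X \<and> (\<forall>x\<in>U. \<exists>\<alpha>>0. aff_ball X A x \<alpha> \<subseteq> U))"
      proof (cases "U \<subseteq> X")
        case True
        then show ?thesis by (simp add: hb subsetD[OF True])
      qed simp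
    qed
    then show ?thesis unfolding aff_topology_def by simp
  qed
  then show "\<exists>L>0. \<forall>l>L. aff_topology X (thresh A l) = aff_topology X A \<and>
           connected_components_of (aff_topology X (thresh A l))
             \<approx> connected_components_of (aff_topology X A)"
    using L0 by (auto intro: eqpoll_refl)
  qed
  show ?thesis using P1 P2 P3 P4 by (intro conjI)
qed

end
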